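(* Let $G'\le G''$ be finite abelian groups and let $k$ be a positive integer dividing $|G'|$. If $L$ is a subgroup of $G''$ with $[G'':L]=k$, then there exists a subgroup $K$ of $G'$ with $[G':K]=k$ and $K\subset L$. *)

theory Defs
  imports "HOL-Algebra.Algebra"
begin

end

theory Submission
  imports Defs "HOL-Computational_Algebra.Primes"
begin

lemma (in group) card_set_mult_trivial_inter:
  assumes P: "subgroup P G" and M: "subgroup M G" and I: "P \<inter> M = {\<one>}"
    and fin: "finite (carrier G)"
  shows "card (P <#> M) = card P * card M"
proof -
  have sub: "P \<subseteq> carrier G" "M \<subseteq> carrier G" using P M subgroup.subset by auto
  have img: "P <#> M = (\<lambda>(x,y). x \<otimes> y) ` (P \<times> M)"
    unfolding set_mult_def by auto
  have inj: "inj_on (\<lambda>(x,y). x \<otimes> y) (P \<times> M)"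
  proof (rule inj_onI, clarify)
    fix x y x' y' assume xs: "x \<in> P" "y \<in> M" "x' \<in> P" "y' \<in> M" and eq: "x \<otimes> y = x' \<otimes> y'"
    have c: "x \<in> carrier G" "y \<in> carrier G" "x' \<in> carrier G" "y' \<in> carrier G" using xs sub by auto
    have "inv x' \<otimes> x = y' \<otimes> inv y"
    proof -
      have "y' = inv x' \<otimes> (x \<otimes> y)" using eq c by (simp add: m_assoc[symmetric])
      thus ?thesis using c by (simp add: m_assoc)
    qed
    moreover have "inv x' \<otimes> x \<in> P" using xs P by (simp add: subgroup.m_closed subgroup.m_inv_closed)
    moreover have "y' \<otimes> inv y \<in> M" using xs M by (simp add: subgroup.m_closed subgroup.m_inv_closed)
    ultimately have "inv x' \<otimes> x = \<one>" using I by auto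
    hence "x = x'" using c by (metis inv_equality inv_inv m_closed inv_closed)
    with eq c show "x = x' \<and> y = y'" by simp
  qed
  have "finite P" "finite M" using sub fin finite_subset by auto
  thus ?thesis using img inj by (simp add: card_image card_cartesian_product)
qed

lemma (in comm_group) comm_group_subgroup_of_order:
  assumes fin: "finite (carrier G)"
  shows "d dvd order G \<Longrightarrow> \<exists>K. subgroup K G \<and> card K = d"
proof (induction d rule: less_induct)
  case (less d)
  have "order G > 0" using fin by (simp add: order_gt_0_iff_finite)
  hence "d > 0" using less.prems by (cases "d = 0") auto
  show ?case
  proof (cases "d = 1")
    case True
    thus ?thesis using triv_subgroup by force
  next
    case False
    then obtain p where p: "Factorial_Ring.prime (p::nat)" "p dvd d" using prime_factor_nat[OF False] by blast
    have dnz: "d \<noteq> 0" using \<open>d > 0\<close> by simp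
    have nu: "\<not> is_unit p" using not_prime_unit p(1) by blast
    obtain m where dm: "d = p ^ multiplicity p d * m" and pm: "\<not> p dvd m"
      using multiplicity_decompose'[where x=d and p=p, OF dnz nu] by blast
    define a where "a = multiplicity p d"
    have a0: "a > 0" unfolding a_def using p \<open>d > 0\<close> by (simp add: prime_multiplicity_gt_zero_iff)
    have "p ^ a > 1" using a0 p prime_gt_1_nat one_less_power by blast
    have "d = p ^ a * m" using dm a_def by simp
    moreover have "m > 0" using dm \<open>d > 0\<close> by (cases "m = 0") auto
    ultimately have "m < d" using \<open>p ^ a > 1\<close> by simp
    have "m dvd d" using dm by (metis dvd_triv_right)
    hence "m dvd order G" using less.prems by (rule dvd_trans)
    then obtain M where M: "subgroup M G" "card M = m" using less.IH \<open>m < d\<close> by blast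
    have "p ^ a dvd d" using \<open>d = p ^ a * m\<close> by (metis dvd_triv_left)
    hence "p ^ a dvd order G" using less.prems by (rule dvd_trans)
    then obtain q where "order G = p ^ a * q" by blast
    then obtain P where P: "subgroup P G" "card P = p ^ a"
      using sylow_thm[of p G a q] p is_group fin by blast
    have PM: "subgroup (P \<inter> M) G" using subgroups_Inter_pair[OF P(1) M(1)] .
    have d1: "card (P \<inter> M) dvd p ^ a"
    proof -
      interpret GP: group "G\<lparr>carrier := P\<rparr>" using subgroup_imp_group[OF P(1)] .
      have "subgroup (P \<inter> M) (G\<lparr>carrier := P\<rparr>)" by (rule subgroup_incl[OF PM P(1)]) blast
      from GP.lagrange[OF this] have "card (rcosets\<^bsub>G\<lparr>carrier := P\<rparr>\<^esub> (P \<inter> M)) * card (P \<inter> M) = p ^ a" using P by (simp add: order_def)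
      then show ?thesis unfolding dvd_def by (metis mult.commute)
    qed
    have d2: "card (P \<inter> M) dvd m"
    proof -
      interpret GM: group "G\<lparr>carrier := M\<rparr>" using subgroup_imp_group[OF M(1)] .
      have "subgroup (P \<inter> M) (G\<lparr>carrier := M\<rparr>)" by (rule subgroup_incl[OF PM M(1)]) blast
      from GM.lagrange[OF this] have "card (rcosets\<^bsub>G\<lparr>carrier := M\<rparr>\<^esub> (P \<inter> M)) * card (P \<inter> M) = m" using M by (simp add: order_def)
      then show ?thesis unfolding dvd_def by (metis mult.commute)
    qed
    have "coprime (p ^ a) m" using p pm by (simp add: prime_imp_coprime_nat)
    hence "card (P \<inter> M) = 1" using d1 d2 coprime_common_divisor_nat by blast
    moreover have "\<one> \<in> P \<inter> M" using PM subgroup.one_closed by blast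
    ultimately have I: "P \<inter> M = {\<one>}" using card_1_singletonE by (metis singletonD)
    have "card (P <#> M) = d" using card_set_mult_trivial_inter[OF P(1) M(1) I fin] P M dm a_def by simp
    thus ?thesis using mult_subgroups P M by blast
  qed
qed

lemma (in comm_group) subgroup_comm_group:
  assumes "subgroup H G" shows "comm_group (G\<lparr>carrier := H\<rparr>)"
proof -
  interpret GH: group "G\<lparr>carrier := H\<rparr>" using subgroup_imp_group[OF assms] .
  show ?thesis
  proof (rule GH.group_comm_groupI)
    fix x y assume "x \<in> carrier (G\<lparr>carrier := H\<rparr>)" "y \<in> carrier (G\<lparr>carrier := H\<rparr>)"
    hence "x \<in> carrier G" "y \<in> carrier G" using subgroup.subset[OF assms] by auto
    thus "x \<otimes>\<^bsub>G\<lparr>carrier := H\<rparr>\<^esub> y = y \<otimes>\<^bsub>G\<lparr>carrier := H\<rparr>\<^esub> x" using m_comm by simp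
  qed
qed

theorem lemma2:
  fixes G :: "('a, 'b) monoid_scheme" and H L :: "'a set" and k :: nat
  assumes "comm_group G" and "finite (carrier G)"
    and "subgroup H G"
    and "k > 0" and "k dvd card H"
    and "subgroup L G" and "card (rcosets\<^bsub>G\<^esub> L) = k"
  shows "\<exists>K. subgroup K (G\<lparr>carrier := H\<rparr>)
             \<and> card (rcosets\<^bsub>G\<lparr>carrier := H\<rparr>\<^esub> K) = k
             \<and> K \<subseteq> L"
proof -
  interpret G: comm_group G by fact
  note fin = assms(2) and HG = assms(3) and LG = assms(6)
  interpret GH: comm_group "G\<lparr>carrier := H\<rparr>" using G.subgroup_comm_group[OF HG] .
  have Lnorm: "L \<lhd> G" using G.subgroup_imp_normal[OF LG] .
  interpret SI: second_isomorphism_grp L G H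
    unfolding second_isomorphism_grp_def second_isomorphism_grp_axioms_def using Lnorm HG by blast
  have LHG: "subgroup (L <#>\<^bsub>G\<^esub> H) G" using G.mult_subgroups[OF LG HG] .
  interpret GLH: group "G\<lparr>carrier := L <#>\<^bsub>G\<^esub> H\<rparr>" using G.subgroup_imp_group[OF LHG] .
  have LsubLH: "L \<subseteq> L <#>\<^bsub>G\<^esub> H" using SI.H_contained_in_set_mult .
  have "G\<lparr>carrier := H\<rparr> Mod (L \<inter> H) \<cong> G\<lparr>carrier := L <#>\<^bsub>G\<^esub> H\<rparr> Mod L"
    using SI.normal_intersection_quotient_isom by (rule is_isoI)
  hence jeq: "card (rcosets\<^bsub>G\<lparr>carrier := H\<rparr>\<^esub> (L \<inter> H)) = card (rcosets\<^bsub>G\<lparr>carrier := L <#>\<^bsub>G\<^esub> H\<rparr>\<^esub> L)"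
    using iso_same_card by (fastforce simp: FactGroup_def)
  define j where "j = card (rcosets\<^bsub>G\<lparr>carrier := H\<rparr>\<^esub> (L \<inter> H))"
  have IG: "subgroup (L \<inter> H) G" using G.subgroups_Inter_pair[OF LG HG] .
  have IH: "subgroup (L \<inter> H) (G\<lparr>carrier := H\<rparr>)" by (rule G.subgroup_incl[OF IG HG]) blast
  have e1: "j * card (L \<inter> H) = card H"
    using GH.lagrange[OF IH] unfolding j_def by (simp add: order_def)
  have LLH: "subgroup L (G\<lparr>carrier := L <#>\<^bsub>G\<^esub> H\<rparr>)" by (rule G.subgroup_incl[OF LG LHG LsubLH])
  have e2: "j * card L = card (L <#>\<^bsub>G\<^esub> H)"
    using GLH.lagrange[OF LLH] unfolding j_def jeq by (simp add: order_def)
  have e3: "card (rcosets\<^bsub>G\<^esub> (L <#>\<^bsub>G\<^esub> H)) * card (L <#>\<^bsub>G\<^esub> H) = card (carrier G)"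
    using G.lagrange[OF LHG] by (simp add: order_def)
  have e4: "k * card L = card (carrier G)"
    using G.lagrange[OF LG] assms(7) by (simp add: order_def)
  have "finite L" using fin LG subgroup.subset finite_subset by blast
  moreover have "L \<noteq> {}" using LG subgroup.one_closed by blast
  ultimately have cL: "card L > 0" by (simp add: card_gt_0_iff)
  define r where "r = card (rcosets\<^bsub>G\<^esub> (L <#>\<^bsub>G\<^esub> H))"
  have "k * card L = (r * j) * card L" using e2 e3 e4 unfolding r_def by (metis mult.assoc)
  hence kr: "k = r * j" using cL by simp
  obtain m0 where m0: "card H = k * m0" using assms(5) by blast
  have "j > 0" using kr assms(4) by (cases "j = 0") auto
  have "j * card (L \<inter> H) = j * (r * m0)" using e1 m0 kr by (simp add: mult.assoc mult.left_commute)
  hence cI: "card (L \<inter> H) = r * m0" using \<open>j > 0\<close> by simp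
  interpret GI: comm_group "G\<lparr>carrier := L \<inter> H\<rparr>" using G.subgroup_comm_group[OF IG] .
  have "finite (L \<inter> H)" using \<open>finite L\<close> by blast
  moreover have "m0 dvd order (G\<lparr>carrier := L \<inter> H\<rparr>)" using cI by (simp add: order_def)
  ultimately obtain K where K: "subgroup K (G\<lparr>carrier := L \<inter> H\<rparr>)" "card K = m0"
    using GI.comm_group_subgroup_of_order[of m0] by auto
  have KG: "subgroup K G" using G.incl_subgroup[OF IG K(1)] .
  have KI: "K \<subseteq> L \<inter> H" using subgroup.subset[OF K(1)] by simp
  have KH: "subgroup K (G\<lparr>carrier := H\<rparr>)" by (rule G.subgroup_incl[OF KG HG]) (use KI in blast)
  have "card (rcosets\<^bsub>G\<lparr>carrier := H\<rparr>\<^esub> K) * m0 = k * m0"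
    using GH.lagrange[OF KH] K(2) m0 by (simp add: order_def)
  moreover have "finite H" using fin HG subgroup.subset finite_subset by blast
  moreover have "H \<noteq> {}" using HG subgroup.one_closed by blast
  ultimately have "card H > 0" by (simp add: card_gt_0_iff)
  have "m0 > 0" using m0 \<open>card H > 0\<close> by (cases "m0 = 0") auto
  have "card (rcosets\<^bsub>G\<lparr>carrier := H\<rparr>\<^esub> K) = k" using \<open>card (rcosets\<^bsub>G\<lparr>carrier := H\<rparr>\<^esub> K) * m0 = k * m0\<close> \<open>m0 > 0\<close> by simp
  thus ?thesis using KH KI by blast
qed

end
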